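(* Let $G\cong Sz(q)={}^2B_2(q)$ with $q=2^{2m+1}$ and $m\ge 1$. Then $o(G)\ge 3.55$.
   Context: For a finite group $G$, $\psi(G)=\sum_{x\in G}|x|$ where $|x|$ is the order of $x$, and $o(G)=\psi(G)/|G|$. $Sz(q)$ is the Suzuki simple group over the field with $q$ elements. *)

theory Defs
  imports "HOL-Analysis.Analysis" "HOL-Algebra.Multiplicative_Group"
begin

definition psi :: "('g, 'c) monoid_scheme \<Rightarrow> nat" where
  "psi G = (\<Sum>x\<in>carrier G. group.ord G x)"

definition avg_order :: "('g, 'c) monoid_scheme \<Rightarrow> real" where
  "avg_order G = real (psi G) / real (card (carrier G))"

text \<open>Suzuki group Sz(q), q = 2^(2m+1), over a finite field 'a of order q,
  as the subgroup of GL_4 generated by the matrices T(a,b), M(l) (l nonzero)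
  and the antidiagonal matrix W (Wilson, The Finite Simple Groups, 4.2).
  Here a^theta = a^(2^(m+1)), so theta^2 is the Frobenius map.\<close>

definition sz_T :: "nat \<Rightarrow> 'a::field \<Rightarrow> 'a \<Rightarrow> 'a^4^4" where
  "sz_T m a b = (let th = 2^(m+1) in
     vector [vector [1, 0, 0, 0],
             vector [a, 1, 0, 0],
             vector [b, a^th, 1, 0],
             vector [a^(2+th) + a*b + b^th, a^(1+th) + b, a, 1]])"

definition sz_M :: "nat \<Rightarrow> 'a::field \<Rightarrow> 'a^4^4" where
  "sz_M m l = (let e = 2^m in
     vector [vector [l^(1+e), 0, 0, 0],
             vector [0, l^e, 0, 0],
             vector [0, 0, (inverse l)^e, 0],
             vector [0, 0, 0, (inverse l)^(1+e)]])"

definition sz_W :: "'a::field^4^4" where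
  "sz_W = vector [vector [0, 0, 0, 1], vector [0, 0, 1, 0],
                  vector [0, 1, 0, 0], vector [1, 0, 0, 0]]"

definition sz_gens :: "nat \<Rightarrow> ('a::field^4^4) set" where
  "sz_gens m = {sz_T m a b | a b. True} \<union> {sz_M m l | l. l \<noteq> 0} \<union> {sz_W}"

text \<open>Closure of the identity under left multiplication by generators; since
  every generator is invertible of finite order over a finite field, this is the
  subgroup generated.\<close>
inductive_set sz_carrier :: "nat \<Rightarrow> ('a::field^4^4) set" for m where
  one: "mat 1 \<in> sz_carrier m"
| step: "g \<in> sz_gens m \<Longrightarrow> x \<in> sz_carrier m \<Longrightarrow> g ** x \<in> sz_carrier m"

definition Sz :: "nat \<Rightarrow> ('a::field^4^4) monoid" where
  "Sz m = \<lparr>carrier = sz_carrier m, mult = (**), one = mat 1\<rparr>"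

end

theory Submission
  imports Defs
begin

lemma fermat_field:
  fixes x :: "'a :: {field, finite}"
  shows "x ^ CARD('a) = x"
proof (cases "x = 0")
  case False
  have "x * (\<Prod>y\<in>UNIV-{0}. x * y) = x * x ^ (card (UNIV :: 'a set) - 1) * \<Prod>(UNIV-{0})"
    by (simp add: prod.distrib mult_ac)
  also have "x * x ^ (card (UNIV :: 'a set) - 1) = x ^ Suc (card (UNIV :: 'a set) - 1)"
    by (subst power_Suc) auto
  also have "Suc (card (UNIV :: 'a set) - 1) = card (UNIV :: 'a set)"
    using finite_UNIV_card_ge_0[where ?'a = 'a] by simp
  also have "(\<Prod>y\<in>UNIV-{0}. x * y) = (\<Prod>y\<in>UNIV-{0}. y)"
    by (rule prod.reindex_bij_witness[of _ "\<lambda>y. y / x" "\<lambda>y. x * y"]) (use False in auto)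
  finally show ?thesis
    by simp
qed (use finite_UNIV_card_ge_0[where ?'a = 'a] in auto)

locale szf =
  fixes m :: nat and F :: "'a::{field,finite} itself"
  assumes card: "CARD('a) = 2^(2*m+1)" and m1: "m \<ge> 1"
begin

abbreviation "e \<equiv> (2::nat)^m"
abbreviation "th \<equiv> (2::nat)^(m+1)"
abbreviation "q \<equiv> (2::nat)^(2*m+1)"

lemma th_eq: "th = 2*e" by simp
lemma q_eq: "q = 2*e*e"
proof -
  have "(2::nat)^(2*m+1) = 2 * 2^(m+m)" by (simp add: mult_2)
  then show ?thesis by (simp add: power_add)
qed

lemma card_eq: "CARD('a) = 2*e*e" using card q_eq by (simp only:)

lemma ferm: "(x::'a) ^ (2*e*e) = x" using fermat_field[of x] unfolding card_eq .

lemma ferm2: "(x::'a) ^ (2*(e*e)) = x" using ferm[of x] by (simp add: mult.assoc)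

lemma char2: "(2::'a) = 0"
proof -
  have "(-1::'a) ^ (2*(e*e)) = 1" by (simp only: power_mult) simp
  then have h: "(-1::'a) = 1" using ferm2[of "-1"] by metis
  have "(1::'a) + (-1) = 0" by simp
  then have "(1::'a) + 1 = 0" by (simp only: h)
  then show ?thesis by (simp only: one_add_one)
qed

lemma add_self [simp]: "(x::'a) + x = 0"
  by (metis char2 mult_2 mult_zero_left)

lemma neg_self [simp]: "- (x::'a) = x"
  by (metis add_self add_eq_0_iff)

lemma diff_is_add: "(x::'a) - y = x + y"
  by (metis diff_minus_eq_add neg_self)

lemma frob2: "((x::'a) + y)^2 = x^2 + y^2"
proof -
  have "(x+y)^2 = x^2 + y^2 + 2*x*y" by (simp add: power2_eq_square algebra_simps)
  then show ?thesis by (simp add: char2)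
qed

lemma frobk: "((x::'a) + y)^(2^k) = x^(2^k) + y^(2^k)"
proof (induction k)
  case (Suc k)
  have "(x+y)^(2^Suc k) = ((x+y)^(2^k))^2" by (simp add: power_mult[symmetric] mult.commute)
  also have "\<dots> = (x^(2^k))^2 + (y^(2^k))^2" using Suc frob2 by simp
  finally show ?case by (simp add: power_mult[symmetric] mult.commute)
qed simp

lemma inj2k: "(x::'a)^(2^k) = y^(2^k) \<Longrightarrow> x = y"
proof -
  assume h: "x^(2^k) = y^(2^k)"
  have "(x + y)^(2^k) = 0" using frobk[of x y k] h by simp
  then have "x + y = 0" by simp
  then show "x = y" by (metis add_eq_0_iff neg_self)
qed

lemma one2k: "(x::'a)^(2^k) = 1 \<Longrightarrow> x = 1"
  using inj2k[of x k 1] by simp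

lemma sq_one: "(x::'a)^2 = 1 \<Longrightarrow> x = 1"
  using one2k[of x 1] by simp

lemma four_one: "(x::'a)^4 = 1 \<Longrightarrow> x = 1"
  using one2k[of x 2] by simp

lemma thth: "((x::'a)^th)^th = x^2"
proof -
  have "(x^th)^th = x^(2*e*(2*e))" by (simp add: power_mult[symmetric])
  also have "2*e*(2*e) = (2*e*e)*2" by simp
  also have "x^\<dots> = (x^(2*e*e))^2" by (simp only: power_mult)
  finally show ?thesis by (simp add: ferm)
qed

lemma frob_th: "((x::'a) + y)^th = x^th + y^th"
  using frobk[of x y "m+1"] by simp

lemma frob_e: "((x::'a) + y)^e = x^e + y^e"
  using frobk[of x y m] by simp

lemma ee2: "(((x::'a)^e)^e)^2 = x"
proof -
  have "(((x::'a)^e)^e)^2 = x^(2*e*e)" by (simp only: power_mult[symmetric] mult.commute mult.left_commute)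
  then show ?thesis by (simp add: ferm)
qed

lemma one_plus_e: "(l::'a) ^ (1+e) = 1 \<Longrightarrow> l = 1"
proof -
  assume h: "l^(1+e) = 1"
  then have l0: "l \<noteq> 0" by auto
  have le0: "l^e \<noteq> 0" using l0 by simp
  have "(l^(1+e))^e = 1" using h by simp
  then have "l^e * (l^e)^e = 1" by (simp add: power_add power_mult_distrib)
  moreover have "l * l^e = 1" using h by (simp add: power_add)
  ultimately have "(l^e)^e = l" using le0
    by (metis mult.commute mult_cancel_left)
  then have "l^2 = l" using ee2[of l] by simp
  then show "l = 1" using l0 by (simp add: power2_eq_square)
qed

lemma one_plus_th: "(l::'a) ^ (1+th) = 1 \<Longrightarrow> l = 1"
proof -
  assume h: "l^(1+th) = 1"
  then have l0: "l \<noteq> 0" by auto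
  have le0: "l^th \<noteq> 0" using l0 by simp
  have "(l^(1+th))^th = 1" using h by simp
  then have "l^th * (l^th)^th = 1" by (simp only: power_add power_mult_distrib power_one_right)
  then have "l^th * l^2 = 1" by (simp only: thth)
  moreover have "l^th * l = 1" using h by (simp add: power_add mult.commute)
  ultimately have "l^2 = l" using le0 by (metis mult_cancel_left)
  then show "l = 1" using l0 by (simp add: power2_eq_square)
qed

lemma q_ge8: "q \<ge> 8"
proof -
  have "(2::nat)^3 \<le> 2^(2*m+1)" by (rule power_increasing) (use m1 in auto)
  then show ?thesis by simp
qed

end

context szf begin
lemma add_self2: "(x::'a) + (x + y) = y" by (simp add: add.assoc[symmetric])
lemma idT: fixes a b x y A B X Y :: 'a
 shows "(a^2+x^2)*(A+X) + (a+x)*(b+A*x+y) + (B + a^2*X + Y) = (a^2*A + a*b + B) + (a*A+b)*x + a*y + (x^2*X + x*y + Y)"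
  by (simp add: algebra_simps add_self2 power2_eq_square)
lemma idW: fixes a b A B :: 'a
 shows "b^2*B + a*b*(a^2*A^2 + A*B + b^2) + A*(a^2*A+a*b+B)^2 = (a^2*A+a*b+B)*(a^2*A^2 + A*B + b^2)"
  by (simp add: algebra_simps add_self2 power2_eq_square char2)
end 

lemma vector_4 [simp]:
 "(vector [x,y,z,w] ::('a::zero)^4)$1 = x"
 "(vector [x,y,z,w] ::('a::zero)^4)$2 = y"
 "(vector [x,y,z,w] ::('a::zero)^4)$3 = z"
 "(vector [x,y,z,w] ::('a::zero)^4)$4 = w"
  unfolding vector_def by simp_all

lemma mm4: "((A::'a::semiring_1^4^4) ** B)$i$j = A$i$1*B$1$j + A$i$2*B$2$j + A$i$3*B$3$j + A$i$4*B$4$j"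
  by (simp add: matrix_matrix_mult_def sum_4)

lemma mv4: "((A::'a::semiring_1^4^4) *v v)$i = A$i$1 * v$1 + A$i$2 * v$2 + A$i$3 * v$3 + A$i$4 * v$4"
  by (simp add: matrix_vector_mult_def sum_4)

lemma mat1_4: "(mat 1 :: 'a::zero_neq_one^4^4)$i$j = (if i = j then 1 else 0)"
  by (simp add: mat_def)

lemma vec4_eq: "(x::'a^4) = y \<longleftrightarrow> x$1 = y$1 \<and> x$2 = y$2 \<and> x$3 = y$3 \<and> x$4 = y$4"
  by (auto simp: vec_eq_iff forall_4)

lemma mat4_eq: "(x::'a^4^4) = y \<longleftrightarrow>
  x$1$1 = y$1$1 \<and> x$1$2 = y$1$2 \<and> x$1$3 = y$1$3 \<and> x$1$4 = y$1$4 \<and>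
  x$2$1 = y$2$1 \<and> x$2$2 = y$2$2 \<and> x$2$3 = y$2$3 \<and> x$2$4 = y$2$4 \<and>
  x$3$1 = y$3$1 \<and> x$3$2 = y$3$2 \<and> x$3$3 = y$3$3 \<and> x$3$4 = y$3$4 \<and>
  x$4$1 = y$4$1 \<and> x$4$2 = y$4$2 \<and> x$4$3 = y$4$3 \<and> x$4$4 = y$4$4"
  by (auto simp: vec_eq_iff forall_4)

lemma four_neq [simp]: "(1::4) \<noteq> 2" "(1::4) \<noteq> 3" "(1::4) \<noteq> 4" "(2::4) \<noteq> 3" "(2::4) \<noteq> 4" "(3::4) \<noteq> 4"
  "(2::4) \<noteq> 1" "(3::4) \<noteq> 1" "(4::4) \<noteq> 1" "(3::4) \<noteq> 2" "(4::4) \<noteq> 2" "(4::4) \<noteq> 3"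
  by simp_all

context szf begin

lemma T_ent [simp]:
  "sz_T m a b $1$1 = 1" "sz_T m a b $1$2 = 0" "sz_T m a b $1$3 = 0" "sz_T m a b $1$4 = 0"
  "sz_T m a b $2$1 = a" "sz_T m a b $2$2 = 1" "sz_T m a b $2$3 = 0" "sz_T m a b $2$4 = 0"
  "sz_T m a b $3$1 = b" "sz_T m a b $3$2 = a^(2*e)" "sz_T m a b $3$3 = 1" "sz_T m a b $3$4 = 0"
  "sz_T m a b $4$1 = a^(2+2*e) + a*b + b^(2*e)" "sz_T m a b $4$2 = a^(1+2*e) + b" "sz_T m a b $4$3 = a" "sz_T m a b $4$4 = 1"
  by (simp_all add: sz_T_def Let_def)

lemma M_ent [simp]:
  "sz_M m l $1$1 = l^(1+e)" "sz_M m l $1$2 = 0" "sz_M m l $1$3 = 0" "sz_M m l $1$4 = 0"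
  "sz_M m l $2$1 = 0" "sz_M m l $2$2 = l^e" "sz_M m l $2$3 = 0" "sz_M m l $2$4 = 0"
  "sz_M m l $3$1 = 0" "sz_M m l $3$2 = 0" "sz_M m l $3$3 = (inverse l)^e" "sz_M m l $3$4 = 0"
  "sz_M m l $4$1 = 0" "sz_M m l $4$2 = 0" "sz_M m l $4$3 = 0" "sz_M m l $4$4 = (inverse l)^(1+e)"
  by (simp_all add: sz_M_def Let_def)

end

lemma W_ent [simp]:
  "sz_W $1$1 = 0" "sz_W $1$2 = 0" "sz_W $1$3 = 0" "sz_W $1$4 = 1"
  "sz_W $2$1 = 0" "sz_W $2$2 = 0" "sz_W $2$3 = 1" "sz_W $2$4 = 0"
  "sz_W $3$1 = 0" "sz_W $3$2 = 1" "sz_W $3$3 = 0" "sz_W $3$4 = 0"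
  "sz_W $4$1 = 1" "sz_W $4$2 = 0" "sz_W $4$3 = 0" "sz_W $4$4 = 0"
  by (simp_all add: sz_W_def)


lemma sz_closed: "x \<in> sz_carrier m \<Longrightarrow> y \<in> sz_carrier m \<Longrightarrow> x ** y \<in> sz_carrier m"
  by (induction x rule: sz_carrier.induct) (auto simp: matrix_mul_assoc[symmetric] intro: sz_carrier.step)

lemma sz_gen_in: "g \<in> sz_gens m \<Longrightarrow> g \<in> sz_carrier m"
  using sz_carrier.step[OF _ sz_carrier.one] by (metis matrix_mul_rid)

lemma T_in: "sz_T m a b \<in> sz_carrier m" by (rule sz_gen_in) (auto simp: sz_gens_def)
lemma M_in: "l \<noteq> 0 \<Longrightarrow> sz_M m l \<in> sz_carrier m" by (rule sz_gen_in) (auto simp: sz_gens_def)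
lemma W_in: "sz_W \<in> sz_carrier m" by (rule sz_gen_in) (auto simp: sz_gens_def)

lemma Sz_monoid: "monoid (Sz m)"
  by (unfold_locales) (auto simp: Sz_def sz_closed matrix_mul_assoc intro: sz_carrier.one)

lemma WW: "(sz_W :: 'a::field^4^4) ** sz_W = mat 1"
  by (simp add: mat4_eq mm4 mat1_4)


lemma tr4 [simp]: "transpose (A::'a^4^4) $ i $ j = A $ j $ i"
  by (simp add: transpose_def)

lemma inv_pair: "(x::'a::field) \<noteq> 0 \<Longrightarrow> y \<noteq> 0 \<Longrightarrow> x * y * (inverse x * inverse y) = 1 \<and> inverse x * inverse y * (x * y) = 1"
  by (simp add: field_simps)

context szf begin

definition symp :: "'a^4^4 \<Rightarrow> bool" where
  "symp g \<longleftrightarrow> transpose g ** sz_W ** g = sz_W"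

lemma symp_T: "symp (sz_T m a b)"
  unfolding symp_def by (simp add: mat4_eq mm4 algebra_simps add_self2)

lemma symp_M: "l \<noteq> 0 \<Longrightarrow> symp (sz_M m l)"
  unfolding symp_def by (simp add: mat4_eq mm4 power_inverse power_add inv_pair)

lemma symp_W: "symp sz_W"
  unfolding symp_def by (simp add: mat4_eq mm4)

lemma symp_S: "x \<in> sz_carrier m \<Longrightarrow> symp (x :: 'a^4^4)"
proof (induction x rule: sz_carrier.induct)
  case one then show ?case by (simp add: symp_def)
next
  case (step g x)
  have "symp g" using step(1) by (auto simp: sz_gens_def symp_T symp_M symp_W)
  then have g: "transpose g ** sz_W ** g = sz_W" by (simp add: symp_def)
  have "transpose (g ** x) ** sz_W ** (g ** x) = transpose x ** (transpose g ** sz_W ** g) ** x"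
    by (simp add: matrix_transpose_mul matrix_mul_assoc)
  also have "\<dots> = sz_W" using g step(3) by (simp add: symp_def matrix_mul_assoc)
  finally show ?case by (simp add: symp_def)
qed

end

context szf begin

lemma zpow [simp]: "(0::'a)^(2*e) = 0" "(0::'a)^e = 0" by (simp_all add: power_0_left)

definition fO :: "'a \<Rightarrow> 'a \<Rightarrow> 'a" where
  "fO x y = x^(2+2*e) + x*y + y^(2*e)"

definition inO :: "'a^4 \<Rightarrow> bool" where
  "inO v \<longleftrightarrow> (v$1 = 0 \<and> v$2 = 0 \<and> v$3 = 0 \<and> v$4 \<noteq> 0) \<or> (v$1 \<noteq> 0 \<and> fO (v$2/v$1) (v$3/v$1) = v$4/v$1)"

lemma inO_cases:
  assumes "inO v"
  obtains "v$1 = 0" "v$2 = 0" "v$3 = 0" "v$4 \<noteq> 0"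
   | x y where "v$1 \<noteq> 0" "v$2 = x * v$1" "v$3 = y * v$1" "v$4 = fO x y * v$1"
  using assms unfolding inO_def by (metis nonzero_eq_divide_eq)

lemma inO_I: "w$1 \<noteq> 0 \<Longrightarrow> w$2 = x * w$1 \<Longrightarrow> w$3 = y * w$1 \<Longrightarrow> w$4 = fO x y * w$1 \<Longrightarrow> inO w"
  unfolding inO_def by simp

lemma frob3: "((x::'a) + y + z)^(2*e) = x^(2*e) + y^(2*e) + z^(2*e)"
  using frob_th by simp

lemma thth': "((x::'a)^(2*e))^(2*e) = x^2" using thth by simp

lemma fO_alt: "fO x y = x^2 * x^(2*e) + x*y + y^(2*e)"
  unfolding fO_def by (simp only: power_add)

lemma sq_th: "((x::'a)^2)^(2*e) = (x^(2*e))^2"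
  by (simp only: power_mult[symmetric] mult.commute)

lemma fO_th: "(fO x y)^(2*e) = (x^(2*e))^2 * x^2 + x^(2*e) * y^(2*e) + y^2"
  unfolding fO_alt frob3 power_mult_distrib sq_th thth' ..

lemma fO_zero: assumes "fO x y = 0" shows "x = 0 \<and> y = 0"
proof -
  define X where "X = x^(2*e)"
  define Y where "Y = y^(2*e)"
  have h1: "x^2*X + x*y + Y = 0" using assms by (simp only: fO_alt X_def Y_def)
  have h2: "X^2*x^2 + X*Y + y^2 = 0" using fO_th[of x y] assms by (simp add: X_def Y_def power_0_left)
  have "y*(x*X+y) = (X^2*x^2 + X*Y + y^2) + X*(x^2*X + x*y + Y)"
    by (simp add: algebra_simps add_self2 power2_eq_square)
  then have "y = 0 \<or> y = x*X" using h1 h2 by (simp add: add_eq_0_iff)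
  then show ?thesis
  proof
    assume "y = 0" then show ?thesis using h1 by (simp add: X_def Y_def)
  next
    assume y: "y = x*X"
    then have Y: "Y = X * x^2" by (simp add: Y_def X_def power_mult_distrib thth')
    have "x^2*X = 0" using h1 y Y by (simp add: algebra_simps add_self2 power2_eq_square char2)
    then have "x = 0" by (simp add: X_def)
    then show ?thesis using y by simp
  qed
qed

end

context szf begin

lemma frob_2e: "((x::'a) + y)^(2*e) = x^(2*e) + y^(2*e)"
  using frob_th by simp

lemma keyT: "fO (a+x) (b + a^(2*e)*x + y) = (a^2*a^(2*e) + a*b + b^(2*e)) + (a*a^(2*e) + b)*x + a*y + fO x y"
  unfolding fO_alt frob2 frob_2e power_mult_distrib thth'
  by (rule idT)

lemma inO_T: assumes "inO v" shows "inO (sz_T m a b *v v)"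
  using assms
proof (cases rule: inO_cases)
  case 1 then show ?thesis unfolding inO_def by (simp add: mv4)
next
  case (2 x y)
  show ?thesis
  proof (rule inO_I[where x = "a+x" and y = "b + a^(2*e)*x + y"])
    show "(sz_T m a b *v v) $ 1 \<noteq> 0" using 2 by (simp add: mv4)
    show "(sz_T m a b *v v) $ 2 = (a + x) * (sz_T m a b *v v) $ 1" using 2 by (simp add: mv4 algebra_simps)
    show "(sz_T m a b *v v) $ 3 = (b + a^(2*e)*x + y) * (sz_T m a b *v v) $ 1" using 2 by (simp add: mv4 algebra_simps)
    show "(sz_T m a b *v v) $ 4 = fO (a + x) (b + a^(2*e)*x + y) * (sz_T m a b *v v) $ 1"
      using 2 unfolding keyT by (simp add: mv4 algebra_simps power_add power2_eq_square)
  qed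
qed

lemma keyM:
  assumes l: "l \<noteq> 0"
  shows "fO (x/l) (y/(l*(l^e)^2)) = fO x y / (l^2*(l^e)^2)"
proof -
  define u where "u = l^e"
  have u0: "u \<noteq> 0" using l by (simp add: u_def)
  have P1: "l^(2*e) = u^2" by (simp add: u_def power_mult[symmetric] mult.commute)
  have P2: "(u^2)^(2*e) = l^2"
  proof -
    have "(u^2)^(2*e) = (l^(2*e*e))^2" by (simp add: u_def power_mult[symmetric] mult.commute mult.left_commute)
    then show ?thesis by (simp add: ferm)
  qed
  have "fO (x/l) (y/(l*u^2)) = x^2/l^2 * (x^(2*e)/u^2) + x*y/(l^2*u^2) + y^(2*e)/(u^2*l^2)"
    unfolding fO_alt power_divide power_mult_distrib P1 P2 by (simp add: power2_eq_square)
  also have "\<dots> = fO x y / (l^2*u^2)"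
    unfolding fO_alt using l u0 by (simp add: field_simps)
  finally show ?thesis by (simp add: u_def)
qed

lemma hM: "(l::'a) \<noteq> 0 \<Longrightarrow> u \<noteq> 0 \<Longrightarrow> inverse (l*u) * (w * f) = f / (l^2*u^2) * (l*u*w)"
  by (simp add: field_simps power2_eq_square)

lemma hM2: "(l::'a) \<noteq> 0 \<Longrightarrow> u \<noteq> 0 \<Longrightarrow> inverse l * inverse u * (f * w) = f * (l * u * w) / (l^2 * u^2)"
  by (simp add: field_simps power2_eq_square)

lemma inO_M: assumes "inO v" "l \<noteq> 0" shows "inO (sz_M m l *v v)"
  using assms(1)
proof (cases rule: inO_cases)
  case 1 then show ?thesis using assms(2) unfolding inO_def by (simp add: mv4)
next
  case (2 x y)
  have l: "l \<noteq> 0" by fact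
  show ?thesis
  proof (rule inO_I[where x = "x/l" and y = "y/(l*(l^e)^2)"])
    show "(sz_M m l *v v) $ 1 \<noteq> 0" using 2 l by (simp add: mv4)
    show "(sz_M m l *v v) $ 2 = (x/l) * (sz_M m l *v v) $ 1" using 2 l by (simp add: mv4 field_simps power_add)
    show "(sz_M m l *v v) $ 3 = (y/(l*(l^e)^2)) * (sz_M m l *v v) $ 1" using 2 l
      by (simp add: mv4 field_simps power_add power_inverse power2_eq_square)
    show "(sz_M m l *v v) $ 4 = fO (x/l) (y/(l*(l^e)^2)) * (sz_M m l *v v) $ 1"
      using 2 l unfolding keyM[OF l] by (simp add: mv4 power_add power_inverse hM2)
  qed
qed

lemma keyW:
  assumes f0: "fO x y \<noteq> 0"
  shows "fO (y / fO x y) (x / fO x y) = 1 / fO x y"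
proof -
  define f where "f = fO x y"
  define X where "X = x^(2*e)"
  define Y where "Y = y^(2*e)"
  define F where "F = f^(2*e)"
  have fe: "f = x^2*X + x*y + Y" by (simp add: f_def fO_alt X_def Y_def)
  have Fe: "F = X^2*x^2 + X*Y + y^2" by (simp add: F_def f_def fO_th X_def Y_def)
  have f0': "f \<noteq> 0" using f0 by (simp add: f_def)
  have F0: "F \<noteq> 0" using f0' by (simp add: F_def)
  have eq: "y^2*Y + x*y*F + X*f^2 = f*F"
    unfolding Fe fe by (simp add: algebra_simps add_self2 power2_eq_square char2)
  have "fO (y/f) (x/f) = y^2/f^2 * (Y/F) + x*y/f^2 + X/F"
    unfolding fO_alt power_divide X_def Y_def F_def by (simp add: power2_eq_square)
  also have "\<dots> = (y^2*Y + x*y*F + X*f^2) / (f^2*F)"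
    using f0' F0 by (simp add: field_simps)
  also have "\<dots> = 1/f" unfolding eq using f0' F0 by (simp add: field_simps power2_eq_square)
  finally show ?thesis by (simp add: f_def)
qed

lemma inO_W: assumes "inO v" shows "inO (sz_W *v v)"
  using assms
proof (cases rule: inO_cases)
  case 1 then show ?thesis by (intro inO_I[where x = 0 and y = 0]) (simp_all add: mv4 fO_def)
next
  case (2 x y)
  show ?thesis
  proof (cases "fO x y = 0")
    case True
    then have "x = 0" "y = 0" using fO_zero[OF True] by simp_all
    then show ?thesis using 2 True unfolding inO_def by (simp add: mv4)
  next
    case False
    show ?thesis
    proof (rule inO_I[where x = "y / fO x y" and y = "x / fO x y"])
      show "(sz_W *v v) $ 1 \<noteq> 0" using 2 False by (simp add: mv4)
      show "(sz_W *v v) $ 2 = (y / fO x y) * (sz_W *v v) $ 1" using 2 False by (simp add: mv4)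
      show "(sz_W *v v) $ 3 = (x / fO x y) * (sz_W *v v) $ 1" using 2 False by (simp add: mv4)
      show "(sz_W *v v) $ 4 = fO (y / fO x y) (x / fO x y) * (sz_W *v v) $ 1"
        using 2 False unfolding keyW[OF False] by (simp add: mv4)
    qed
  qed
qed

lemma inO_S: "g \<in> sz_carrier m \<Longrightarrow> inO v \<Longrightarrow> inO ((g :: 'a^4^4) *v v)"
proof (induction g arbitrary: v rule: sz_carrier.induct)
  case one then show ?case by simp
next
  case (step g x)
  have "inO (x *v v)" using step by simp
  then have "inO (g *v (x *v v))" using step(1) by (auto simp: sz_gens_def inO_T inO_M inO_W)
  then show ?case by (simp add: matrix_vector_mul_assoc)
qed

end

context szf begin

lemma pow_inj1e: "(a::'a) \<noteq> 0 \<Longrightarrow> b \<noteq> 0 \<Longrightarrow> a^(1+e) = b^(1+e) \<Longrightarrow> a = b"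
proof -
  assume a: "a \<noteq> 0" and b: "b \<noteq> 0" and h: "a^(1+e) = b^(1+e)"
  have "(a/b)^(1+e) = 1" using h b by (simp add: power_divide)
  then have "a/b = 1" using one_plus_e by blast
  then show "a = b" using b by simp
qed

lemma M_mult: "sz_M m a ** sz_M m b = (sz_M m (a*b) :: 'a^4^4)"
  by (simp add: mat4_eq mm4 power_mult_distrib)

lemma M_one: "sz_M m 1 = (mat 1 :: 'a^4^4)"
  by (simp add: mat4_eq mat1_4)

lemma WMW: "sz_W ** sz_M m l ** sz_W = (sz_M m (inverse l) :: 'a^4^4)"
  by (simp add: mat4_eq mm4)

lemma M_inj: "sz_M m a = (sz_M m b :: 'a^4^4) \<Longrightarrow> a = b"
proof -
  assume "sz_M m a = (sz_M m b :: 'a^4^4)"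
  then have "sz_M m a $2$2 = (sz_M m b :: 'a^4^4) $2$2" by simp
  then have "a^(2^m) = b^(2^m)" by simp
  then show "a = b" by (rule inj2k)
qed

lemma dist_l:
  fixes l :: 'a
  assumes "l \<noteq> 0" "l \<noteq> 1"
  shows "l * l^e \<noteq> l^e" "l * l^e \<noteq> inverse (l^e)" "l * l^e \<noteq> inverse l * inverse (l^e)"
        "l^e \<noteq> inverse (l^e)" "l^e \<noteq> inverse l * inverse (l^e)" "inverse (l^e) \<noteq> inverse l * inverse (l^e)"
proof -
  have u0: "l^e \<noteq> 0" by (rule power_not_zero[OF assms(1)])
  have A: "l * (l^e)^2 \<noteq> 1"
  proof
    assume "l * (l^e)^2 = 1"
    then have "l^(1+th) = 1" by (simp add: power_add power_mult[symmetric] mult.commute)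
    then show False using one_plus_th assms by blast
  qed
  have B: "l * l^e \<noteq> 1"
  proof
    assume "l * l^e = 1"
    then have "l^(1+e) = 1" by (simp add: power_add)
    then show False using one_plus_e assms by blast
  qed
  have C: "l^e \<noteq> 1" using one2k[of l m] assms by auto
  show "l * l^e \<noteq> l^e" using assms u0 by simp
  show "l * l^e \<noteq> inverse (l^e)" using A u0 by (auto simp: field_simps power2_eq_square)
  show "l * l^e \<noteq> inverse l * inverse (l^e)"
  proof
    assume "l * l^e = inverse l * inverse (l^e)"
    then have "(l*l^e)^2 = 1" using assms u0 by (simp add: field_simps power2_eq_square)
    then show False using sq_one B by blast
  qed
  show "l^e \<noteq> inverse (l^e)"
  proof
    assume "l^e = inverse (l^e)"
    then have "(l^e)^2 = 1" using u0 by (simp add: field_simps power2_eq_square)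
    then show False using sq_one C by blast
  qed
  show "l^e \<noteq> inverse l * inverse (l^e)" using A u0 assms by (auto simp: field_simps power2_eq_square)
  show "inverse (l^e) \<noteq> inverse l * inverse (l^e)" using assms u0 by (simp add: field_simps)
qed

lemma comm_M:
  assumes l: "l \<noteq> 0" "l \<noteq> 1" and c: "j ** sz_M m l = sz_M m l ** (j :: 'a^4^4)"
  shows "r \<noteq> s \<Longrightarrow> j$r$s = 0"
proof -
  note d = dist_l[OF l]
  have E: "\<And>r s. (j ** sz_M m l)$r$s = (sz_M m l ** j)$r$s" using c by simp
  have X: "\<And>a x y. a * x = y * (a::'a) \<Longrightarrow> x \<noteq> y \<Longrightarrow> a = 0" by (simp add: mult.commute)
  assume rs: "r \<noteq> s"
  show "j$r$s = 0"
    using exhaust_4[of r] exhaust_4[of s] rs E[of r s] d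
    by (auto simp: mm4 power_add power_inverse dest!: X)
qed

lemma v_in:
  "inO (vector [1,1,0,1] :: 'a^4)" "inO (vector [1,0,1,1] :: 'a^4)" "inO (vector [1,1,1,1] :: 'a^4)"
  unfolding inO_def by (simp_all add: fO_def)

lemma D_sub:
  assumes d: "d \<in> sz_carrier m" and off: "\<And>r s. r \<noteq> s \<Longrightarrow> (d :: 'a^4^4)$r$s = 0"
  shows "\<exists>l. l \<noteq> 0 \<and> d = sz_M m l"
proof -
  have o: "d$1$2 = 0" "d$1$3 = 0" "d$1$4 = 0" "d$2$1 = 0" "d$2$3 = 0" "d$2$4 = 0"
    "d$3$1 = 0" "d$3$2 = 0" "d$3$4 = 0" "d$4$1 = 0" "d$4$2 = 0" "d$4$3 = 0" by (simp_all add: off)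
  have sy: "transpose d ** sz_W ** d = sz_W" using symp_S[OF d] by (simp add: symp_def)
  then have "(transpose d ** sz_W ** d)$1$4 = sz_W $1$4" "(transpose d ** sz_W ** d)$2$3 = sz_W $2$3" by simp_all
  then have s14: "d$1$1 * d$4$4 = 1" and s23: "d$2$2 * d$3$3 = 1" using o by (simp_all add: mm4)
  define d1 where "d1 = d$1$1"
  define d2 where "d2 = d$2$2"
  define d3 where "d3 = d$3$3"
  define d4 where "d4 = d$4$4"
  have nz: "d1 \<noteq> 0" "d2 \<noteq> 0" "d3 \<noteq> 0" "d4 \<noteq> 0" using s14 s23 by (auto simp: d1_def d2_def d3_def d4_def)
  have i1: "inO (d *v vector [1,1,0,1])" using inO_S[OF d v_in(1)] .
  have i2: "inO (d *v vector [1,0,1,1])" using inO_S[OF d v_in(2)] .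
  have i3: "inO (d *v vector [1,1,1,1])" using inO_S[OF d v_in(3)] .
  define u where "u = d2/d1"
  define w where "w = d3/d1"
  define c where "c = d4/d1"
  have h1: "fO u 0 = c" using i1 nz o unfolding inO_def by (simp add: mv4 u_def c_def d1_def d2_def d4_def)
  have h3: "fO u w = c" using i3 nz o unfolding inO_def by (simp add: mv4 u_def w_def c_def d1_def d2_def d3_def d4_def)
  have h2: "fO 0 w = c" using i2 nz o unfolding inO_def by (simp add: mv4 w_def c_def d1_def d3_def d4_def)
  have h1': "u^(2+2*e) = c" using h1 by (simp add: fO_def)
  have h2': "w^(2*e) = c" using h2 by (simp add: fO_def power_0_left)
  have "c + u*w + c = c" using h3 h1' h2' unfolding fO_def by simp
  then have uw: "u*w = c" by (simp add: add.commute add_self2)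
  have u0: "u \<noteq> 0" using nz by (simp add: u_def)
  define U where "U = u^e"
  have U0: "U \<noteq> 0" using u0 by (simp add: U_def)
  have cU0: "c = u^2 * u^(2*e)" using h1' by (simp only: power_add)
  have uU: "u^(2*e) = U^2" by (simp only: U_def power_mult[symmetric] mult.commute)
  have cU: "c = (u*U)^2" using cU0 uU by (simp add: power_mult_distrib)
  have "c * d1^2 = 1" using s23 uw nz by (simp add: u_def w_def d1_def d2_def d3_def field_simps power2_eq_square)
  then have "(u*U*d1)^2 = 1" using cU by (simp add: power_mult_distrib)
  then have k: "u*U*d1 = 1" by (rule sq_one)
  define l where "l = inverse u"
  have l0: "l \<noteq> 0" using u0 by (simp add: l_def)
  have lp: "l^e = inverse U" by (simp add: l_def U_def power_inverse)
  have e1: "d1 = l^(1+e)" using k u0 U0 by (simp add: power_add lp l_def field_simps U_def[symmetric])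
  have e2: "d2 = l^e" using k u0 U0 by (simp add: lp u_def field_simps)
  have d4c: "d4 = c*d1" using nz by (simp add: c_def)
  have "d4 = (u*U) * (u*U*d1)" unfolding d4c cU by (simp add: power2_eq_square mult.assoc)
  then have d4u: "d4 = u*U" using k by simp
  have e4: "d4 = (inverse l)^(1+e)" using d4u by (simp add: l_def U_def power_add)
  have s23': "d2 * d3 = 1" using s23 by (simp add: d2_def d3_def)
  have "d2 * U = 1" using e2 lp U0 by simp
  then have "d3 = U" using s23' by (metis mult.commute mult.left_neutral mult.assoc)
  then have e3: "d3 = (inverse l)^e" by (simp add: l_def U_def)
  show ?thesis
    using l0 e1 e2 e3 e4 o by (auto simp: mat4_eq d1_def d2_def d3_def d4_def)
qed

end

lemma (in group) cancel1: "k \<in> carrier G \<Longrightarrow> x \<in> carrier G \<Longrightarrow> inv k \<otimes> (k \<otimes> x) = x"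
  by (simp add: m_assoc[symmetric])

lemma (in group) cancel2: "k \<in> carrier G \<Longrightarrow> x \<in> carrier G \<Longrightarrow> k \<otimes> (inv k \<otimes> x) = x"
  by (simp add: m_assoc[symmetric])

lemma (in group) conj_pow: "k \<in> carrier G \<Longrightarrow> h \<in> carrier G \<Longrightarrow> (k \<otimes> h \<otimes> inv k) [^] (n::nat) = k \<otimes> h [^] n \<otimes> inv k"
proof (induction n)
  case 0 then show ?case by simp
next
  case (Suc n)
  have "(k \<otimes> h \<otimes> inv k) [^] Suc n = (k \<otimes> h [^] n \<otimes> inv k) \<otimes> (k \<otimes> h \<otimes> inv k)"
    using Suc by simp
  also have "\<dots> = k \<otimes> (h [^] n \<otimes> (inv k \<otimes> k) \<otimes> h) \<otimes> inv k"
    using Suc.prems by (simp add: m_assoc cancel1)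
  also have "\<dots> = k \<otimes> h [^] Suc n \<otimes> inv k" using Suc.prems by (simp add: m_assoc)
  finally show ?case .
qed

lemma (in group) ord_conj: "k \<in> carrier G \<Longrightarrow> h \<in> carrier G \<Longrightarrow> ord (k \<otimes> h \<otimes> inv k) = ord h"
proof -
  assume k: "k \<in> carrier G" and h: "h \<in> carrier G"
  have "\<And>n. (k \<otimes> h \<otimes> inv k) [^] n = \<one> \<longleftrightarrow> h [^] (n::nat) = \<one>"
  proof -
    fix n :: nat
    have "(k \<otimes> h \<otimes> inv k) [^] n = \<one> \<longleftrightarrow> k \<otimes> h [^] n \<otimes> inv k = \<one>" using conj_pow[OF k h] by simp
    also have "\<dots> \<longleftrightarrow> h [^] n = \<one>"
    proof
      assume a: "k \<otimes> h [^] n \<otimes> inv k = \<one>"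
      have "h [^] n = inv k \<otimes> (k \<otimes> h [^] n \<otimes> inv k) \<otimes> k" using k h by (simp add: m_assoc cancel1)
      then show "h [^] n = \<one>" using a k by simp
    qed (use k in simp)
    finally show "(k \<otimes> h \<otimes> inv k) [^] n = \<one> \<longleftrightarrow> h [^] (n::nat) = \<one>" .
  qed
  then show ?thesis using k h by (simp add: ord_unique pow_eq_id)
qed

lemma ord_iso:
  assumes G: "group G" and H: "group H" and phi: "\<phi> \<in> iso G H" and x: "x \<in> carrier G"
  shows "group.ord H (\<phi> x) = group.ord G x"
proof -
  have hom: "\<phi> \<in> hom G H" using phi by (simp add: iso_def)
  have inj: "inj_on \<phi> (carrier G)" using phi by (simp add: iso_def bij_betw_def)
  have one: "\<phi> \<one>\<^bsub>G\<^esub> = \<one>\<^bsub>H\<^esub>" using hom G H by (simp add: group_hom.hom_one group_hom_axioms_def group_hom_def)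
  have "\<And>n::nat. \<phi> x [^]\<^bsub>H\<^esub> n = \<one>\<^bsub>H\<^esub> \<longleftrightarrow> x [^]\<^bsub>G\<^esub> n = \<one>\<^bsub>G\<^esub>"
  proof -
    fix n :: nat
    have "\<phi> x [^]\<^bsub>H\<^esub> n = \<phi> (x [^]\<^bsub>G\<^esub> n)" using hom_nat_pow[OF hom x G H] by simp
    moreover have "\<phi> (x [^]\<^bsub>G\<^esub> n) = \<phi> \<one>\<^bsub>G\<^esub> \<longleftrightarrow> x [^]\<^bsub>G\<^esub> n = \<one>\<^bsub>G\<^esub>"
    proof (rule inj_on_eq_iff[OF inj])
      show "x [^]\<^bsub>G\<^esub> n \<in> carrier G" using x G by (simp add: group.is_monoid monoid.nat_pow_closed)
      show "\<one>\<^bsub>G\<^esub> \<in> carrier G" using G by (simp add: group.is_monoid monoid.one_closed)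
    qed
    ultimately show "\<phi> x [^]\<^bsub>H\<^esub> n = \<one>\<^bsub>H\<^esub> \<longleftrightarrow> x [^]\<^bsub>G\<^esub> n = \<one>\<^bsub>G\<^esub>" using one by simp
  qed
  moreover have "\<phi> x \<in> carrier H" using hom x by (simp add: hom_def Pi_def)
  ultimately show ?thesis using G H x by (simp add: group.ord_unique group.pow_eq_id)
qed

locale szg = szf m F for m and F :: "'a::{field,finite} itself" +
  assumes grp: "group (Sz m :: ('a^4^4) monoid)"
begin

abbreviation H :: "('a^4^4) monoid" where "H \<equiv> Sz m"

lemma carrH [simp]: "carrier H = sz_carrier m" by (simp add: Sz_def)
lemma multH [simp]: "x \<otimes>\<^bsub>H\<^esub> y = x ** y" by (simp add: Sz_def)
lemma oneH [simp]: "\<one>\<^bsub>H\<^esub> = mat 1" by (simp add: Sz_def)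

lemma KL:
  assumes l0: "l0 \<noteq> 0" "l0 \<noteq> 1" and j: "j \<in> sz_carrier m"
    and conj: "j \<otimes>\<^bsub>H\<^esub> sz_M m l0 \<otimes>\<^bsub>H\<^esub> inv\<^bsub>H\<^esub> j = sz_M m l'" and l': "l' \<noteq> 0"
  shows "(\<exists>l. l \<noteq> 0 \<and> j = sz_M m l) \<or> (\<exists>l. l \<noteq> 0 \<and> j = sz_W ** sz_M m l)"
proof -
  interpret H: group H by (rule grp)
  have h0: "sz_M m l0 \<in> carrier H" using M_in l0 by simp
  have jc: "j \<in> carrier H" using j by simp
  have "sz_M m l' \<otimes>\<^bsub>H\<^esub> j = j \<otimes>\<^bsub>H\<^esub> sz_M m l0"
    unfolding conj[symmetric] using h0 jc by (simp add: H.m_assoc del: multH carrH oneH)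
  then have comm: "j ** sz_M m l0 = sz_M m l' ** j" by simp
  have ent: "\<And>r. j$r$1 * l0^(1+e) = (sz_M m l')$r$r * j$r$1"
  proof -
    fix r :: 4
    have "(j ** sz_M m l0)$r$1 = (sz_M m l' ** j)$r$1" using comm by simp
    then show "j$r$1 * l0^(1+e) = (sz_M m l')$r$r * j$r$1"
      using exhaust_4[of r] by (auto simp: mm4)
  qed
  have e1: "inO (vector [1,0,0,0] :: 'a^4)" unfolding inO_def by (simp add: fO_def)
  have io: "inO (j *v vector [1,0,0,0])" by (rule inO_S[OF j e1])
  show ?thesis
  proof (cases "j$1$1 = 0")
    case False
    have "l0^(1+e) = l'^(1+e)" using ent[of 1] False by simp
    then have "l0 = l'" using pow_inj1e[OF l0(1) l'] by blast
    then have "j ** sz_M m l0 = sz_M m l0 ** j" using comm by simp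
    then have off: "\<And>r s. r \<noteq> s \<Longrightarrow> j$r$s = 0" by (rule comm_M[OF l0(1) l0(2)])
    have "\<exists>l. l \<noteq> 0 \<and> j = sz_M m l" using D_sub[OF j off] .
    then show ?thesis by (rule disjI1)
  next
    case True
    then have j41: "j$4$1 \<noteq> 0" using io unfolding inO_def by (simp add: mv4)
    have "l0^(1+e) = (inverse l')^(1+e)" using ent[of 4] j41 by (simp add: power_inverse)
    moreover have "inverse l' \<noteq> 0" using l' by simp
    ultimately have "l0 = inverse l'" using pow_inj1e[OF l0(1)] by blast
    then have h0W: "sz_M m l0 = sz_W ** sz_M m l' ** sz_W" using WMW by simp
    define w where "w = sz_W ** j"
    have wS: "w \<in> sz_carrier m" using sz_closed[OF W_in j] by (simp add: w_def)
    have "w ** sz_M m l0 = sz_M m l0 ** w"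
    proof -
      have "w ** sz_M m l0 = sz_W ** (sz_M m l' ** j)" unfolding w_def comm[symmetric] by (simp add: matrix_mul_assoc)
      also have "\<dots> = sz_W ** sz_M m l' ** (sz_W ** sz_W) ** j" by (simp add: WW matrix_mul_assoc)
      also have "\<dots> = sz_M m l0 ** w" unfolding h0W w_def by (simp add: matrix_mul_assoc)
      finally show ?thesis .
    qed
    then have off: "\<And>r s. r \<noteq> s \<Longrightarrow> w$r$s = 0" by (rule comm_M[OF l0(1) l0(2)])
    obtain l where l: "l \<noteq> 0" "w = sz_M m l" using D_sub[OF wS off] by blast
    have "j = sz_W ** w" unfolding w_def by (simp add: matrix_mul_assoc WW)
    then show ?thesis using l by blast
  qed
qed

end

lemma nt7:
  assumes "(d::nat) dvd 2^(2*m+1) - 1" "d \<noteq> 1" "d \<ge> 1"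
  shows "d \<ge> 7"
proof -
  have m3: "\<exists>k. (4::nat)^n = 3*k + 1" for n
  proof (induction n)
    case 0 then show ?case by (intro exI[of _ 0]) simp
  next
    case (Suc n)
    then obtain k where "(4::nat)^n = 3*k+1" by blast
    then have "(4::nat)^Suc n = 3*(4*k+1) + 1" by simp
    then show ?case by blast
  qed
  have m5: "\<exists>k. (4::nat)^n = 5*k + 1 \<or> (4::nat)^n = 5*k + 4" for n
  proof (induction n)
    case 0 then show ?case by (intro exI[of _ 0]) simp
  next
    case (Suc n)
    then obtain k where "(4::nat)^n = 5*k+1 \<or> (4::nat)^n = 5*k+4" by blast
    then have "(4::nat)^Suc n = 5*(4*k) + 4 \<or> (4::nat)^Suc n = 5*(4*k+3) + 1" by auto
    then show ?case by blast
  qed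
  have N: "(2::nat)^(2*m+1) - 1 = 2*4^m - 1" by (simp add: power_mult)
  obtain k where k: "(4::nat)^m = 3*k + 1" using m3 by blast
  obtain j where j: "(4::nat)^m = 5*j + 1 \<or> (4::nat)^m = 5*j + 4" using m5 by blast
  have N3: "(2::nat)^(2*m+1) - 1 = 6*k+1" using N k by simp
  have N5: "(2::nat)^(2*m+1) - 1 = 10*j+1 \<or> (2::nat)^(2*m+1) - 1 = 10*j+7" using N j by auto
  have n2: "\<not> (2::nat) dvd 6*k+1" by presburger
  have n3: "\<not> (3::nat) dvd 6*k+1" by presburger
  have n5: "\<not> (5::nat) dvd 10*j+1" "\<not> (5::nat) dvd 10*j+7" by presburger+
  have d3: "d dvd 6*k+1" using assms(1) N3 by simp
  have d5: "d dvd 10*j+1 \<or> d dvd 10*j+7" using assms(1) N5 by auto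
  show ?thesis
  proof (rule ccontr)
    assume "\<not> d \<ge> 7"
    then have "d = 2 \<or> d = 3 \<or> d = 4 \<or> d = 5 \<or> d = 6" using assms(2,3) by auto
    then show False
    proof (elim disjE)
      assume "d = 2" then show False using d3 n2 by simp
    next
      assume "d = 3" then show False using d3 n3 by simp
    next
      assume d4: "d = 4"
      have "(2::nat) dvd 4" by simp
      then have "2 dvd 6*k+1" using d3 d4 dvd_trans by blast
      then show False using n2 by simp
    next
      assume "d = 5" then show False using d5 n5 by auto
    next
      assume d6: "d = 6"
      have "(2::nat) dvd 6" by simp
      then have "2 dvd 6*k+1" using d3 d6 dvd_trans by blast
      then show False using n2 by simp
    qed
  qed
qed

context szg begin

declare carrH[simp del] multH[simp del] oneH[simp del]

lemma finS: "finite (sz_carrier m :: ('a^4^4) set)" by (rule finite_subset[of _ UNIV]) auto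

lemma M_pow: "sz_M m l [^]\<^bsub>H\<^esub> (n::nat) = sz_M m (l^n)"
  by (induction n) (simp_all add: oneH multH M_one M_mult mult.commute)

lemma l_pow: "(l::'a) \<noteq> 0 \<Longrightarrow> l^(CARD('a) - 1) = 1"
proof -
  assume l: "l \<noteq> 0"
  have "l * l^(CARD('a) - 1) = l^CARD('a)" using finite_UNIV_card_ge_0[where ?'a = 'a]
    by (simp add: power_Suc[symmetric])
  also have "\<dots> = l * 1" by (simp add: fermat_field)
  finally show ?thesis using l by simp
qed

definition Mset :: "('a^4^4) set" where "Mset = (\<lambda>l. sz_M m l) ` (UNIV - {0})"
definition Cs :: "('a^4^4) set" where "Cs = (\<lambda>l. sz_M m l) ` (UNIV - {0,1})"

lemma card_Mset: "card Mset \<le> CARD('a) - 1"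
proof -
  have "card Mset \<le> card (UNIV - {0::'a})" unfolding Mset_def by (rule card_image_le) simp
  also have "\<dots> = CARD('a) - 1" by (simp add: card_Diff_singleton)
  finally show ?thesis .
qed

lemma card_Cs: "card Cs = CARD('a) - 2"
proof -
  have "inj_on (\<lambda>l. sz_M m l :: 'a^4^4) (UNIV - {0,1})" by (auto intro: inj_onI M_inj)
  then have "card Cs = card (UNIV - {0::'a,1})" unfolding Cs_def by (rule card_image)
  also have "\<dots> = CARD('a) - 2" by (subst card_Diff_subset) auto
  finally show ?thesis .
qed

lemma Cs_sub: "Cs \<subseteq> sz_carrier m" unfolding Cs_def using M_in by auto

lemma ord_Cs: assumes "h \<in> Cs" shows "group.ord H h \<ge> 7"
proof -
  interpret H: group H by (rule grp)
  obtain l where l: "l \<noteq> 0" "l \<noteq> 1" "h = sz_M m l" using assms by (auto simp: Cs_def)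
  have hc: "h \<in> carrier H" using l M_in by (simp add: carrH)
  have "h [^]\<^bsub>H\<^esub> (CARD('a) - 1) = \<one>\<^bsub>H\<^esub>" unfolding l(3) M_pow l_pow[OF l(1)] by (simp add: M_one oneH)
  then have dv: "H.ord h dvd CARD('a) - 1" using H.pow_eq_id[OF hc] by simp
  have "h \<noteq> \<one>\<^bsub>H\<^esub>"
  proof
    assume "h = \<one>\<^bsub>H\<^esub>"
    then have "sz_M m l = sz_M m 1" using l by (simp add: oneH M_one)
    then show False using M_inj l by blast
  qed
  then have n1: "H.ord h \<noteq> 1" using H.ord_eq_1[OF hc] by simp
  have g1: "H.ord h \<ge> 1" using H.ord_ge_1[OF _ hc] finS by (simp add: carrH)
  show ?thesis using nt7[of "H.ord h" m] dv n1 g1 card by simp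
qed

definition Xs :: "('a^4^4) set" where
  "Xs = {k \<otimes>\<^bsub>H\<^esub> h \<otimes>\<^bsub>H\<^esub> inv\<^bsub>H\<^esub> k | k h. k \<in> sz_carrier m \<and> h \<in> Cs}"

lemma Xs_sub: "Xs \<subseteq> sz_carrier m"
proof -
  interpret H: group H by (rule grp)
  show ?thesis unfolding Xs_def using Cs_sub by (auto simp: carrH[symmetric])
qed

lemma ord_Xs: "x \<in> Xs \<Longrightarrow> group.ord H x \<ge> 7"
proof -
  interpret H: group H by (rule grp)
  assume "x \<in> Xs"
  then obtain k h where "k \<in> sz_carrier m" "h \<in> Cs" "x = k \<otimes>\<^bsub>H\<^esub> h \<otimes>\<^bsub>H\<^esub> inv\<^bsub>H\<^esub> k"
    unfolding Xs_def by blast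
  then show ?thesis using ord_Cs H.ord_conj Cs_sub by (auto simp: carrH)
qed

end

lemma (in group) conj_solve: "k \<in> carrier G \<Longrightarrow> h \<in> carrier G \<Longrightarrow> k \<otimes> h \<otimes> inv k = x \<Longrightarrow> h = inv k \<otimes> x \<otimes> k"
  by (auto simp: m_assoc cancel1)

context szg begin

definition Fib :: "('a^4^4) \<Rightarrow> (('a^4^4) \<times> ('a^4^4)) set" where
  "Fib x = {p :: ('a^4^4) \<times> ('a^4^4). p \<in> sz_carrier m \<times> Cs \<and> fst p \<otimes>\<^bsub>H\<^esub> snd p \<otimes>\<^bsub>H\<^esub> inv\<^bsub>H\<^esub> (fst p) = x}"

lemma fiber: assumes x: "x \<in> Xs" shows "card (Fib x) \<le> 2*(CARD('a)-1)"
proof -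
  interpret H: group H by (rule grp)
  obtain k0 h0 where k0: "k0 \<in> sz_carrier m" and h0: "h0 \<in> Cs" and xe: "x = k0 \<otimes>\<^bsub>H\<^esub> h0 \<otimes>\<^bsub>H\<^esub> inv\<^bsub>H\<^esub> k0"
    using x unfolding Xs_def by blast
  obtain l0 where l0: "l0 \<noteq> 0" "l0 \<noteq> 1" and h0e: "h0 = sz_M m l0" using h0 by (auto simp: Cs_def)
  have k0c: "k0 \<in> carrier H" using k0 by (simp add: carrH)
  have h0c: "h0 \<in> carrier H" using h0 Cs_sub by (auto simp: carrH)
  define \<psi> where "\<psi> = (\<lambda>p :: ('a^4^4) \<times> ('a^4^4). inv\<^bsub>H\<^esub> (fst p) \<otimes>\<^bsub>H\<^esub> k0)"
  have inj: "inj_on \<psi> (Fib x)"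
  proof (rule inj_onI)
    fix p p' assume p: "p \<in> Fib x" and p': "p' \<in> Fib x" and eq: "\<psi> p = \<psi> p'"
    obtain k h where pe: "p = (k,h)" by force
    obtain k' h' where pe': "p' = (k',h')" by force
    have kc: "k \<in> carrier H" "h \<in> carrier H" using p pe Cs_sub by (auto simp: Fib_def carrH)
    have kc': "k' \<in> carrier H" "h' \<in> carrier H" using p' pe' Cs_sub by (auto simp: Fib_def carrH)
    have "inv\<^bsub>H\<^esub> k = inv\<^bsub>H\<^esub> k'" using eq kc kc' k0c unfolding \<psi>_def pe pe' by simp
    then have kk: "k = k'" using kc kc' by (metis H.inv_inv)
    have "h = inv\<^bsub>H\<^esub> k \<otimes>\<^bsub>H\<^esub> x \<otimes>\<^bsub>H\<^esub> k" using H.conj_solve kc p pe by (auto simp: Fib_def)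
    moreover have "h' = inv\<^bsub>H\<^esub> k' \<otimes>\<^bsub>H\<^esub> x \<otimes>\<^bsub>H\<^esub> k'" using H.conj_solve kc' p' pe' by (auto simp: Fib_def)
    ultimately show "p = p'" using pe pe' kk by simp
  qed
  have img: "\<psi> ` Fib x \<subseteq> Mset \<union> (\<lambda>d. sz_W ** d) ` Mset"
  proof
    fix j assume "j \<in> \<psi> ` Fib x"
    then obtain k h where kh: "(k,h) \<in> Fib x" and je: "j = inv\<^bsub>H\<^esub> k \<otimes>\<^bsub>H\<^esub> k0" unfolding \<psi>_def by force
    have kc: "k \<in> carrier H" "h \<in> carrier H" using kh Cs_sub by (auto simp: Fib_def carrH)
    have hx: "k \<otimes>\<^bsub>H\<^esub> h \<otimes>\<^bsub>H\<^esub> inv\<^bsub>H\<^esub> k = x" using kh by (simp add: Fib_def)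
    have jc: "j \<in> carrier H" using je kc k0c by simp
    have "j \<otimes>\<^bsub>H\<^esub> h0 \<otimes>\<^bsub>H\<^esub> inv\<^bsub>H\<^esub> j = inv\<^bsub>H\<^esub> k \<otimes>\<^bsub>H\<^esub> (k0 \<otimes>\<^bsub>H\<^esub> h0 \<otimes>\<^bsub>H\<^esub> inv\<^bsub>H\<^esub> k0) \<otimes>\<^bsub>H\<^esub> k"
      using kc k0c h0c unfolding je by (simp add: H.inv_mult_group H.m_assoc)
    also have "\<dots> = h" unfolding xe[symmetric] using H.conj_solve[OF kc hx] by simp
    finally have conj: "j \<otimes>\<^bsub>H\<^esub> sz_M m l0 \<otimes>\<^bsub>H\<^esub> inv\<^bsub>H\<^esub> j = h" using h0e by simp
    obtain l' where l': "l' \<noteq> 0" "h = sz_M m l'" using kh by (auto simp: Fib_def Cs_def)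
    have "(\<exists>l. l \<noteq> 0 \<and> j = sz_M m l) \<or> (\<exists>l. l \<noteq> 0 \<and> j = sz_W ** sz_M m l)"
      using KL[OF l0 _ _ l'(1)] jc conj l'(2) by (simp add: carrH)
    then show "j \<in> Mset \<union> (\<lambda>d. sz_W ** d) ` Mset" unfolding Mset_def by blast
  qed
  have fM: "finite Mset" unfolding Mset_def by simp
  have "card (Fib x) = card (\<psi> ` Fib x)" using inj by (simp add: card_image)
  also have "\<dots> \<le> card (Mset \<union> (\<lambda>d. sz_W ** d) ` Mset)" using img fM by (simp add: card_mono)
  also have "\<dots> \<le> card Mset + card ((\<lambda>d. sz_W ** d) ` Mset)" by (rule card_Un_le)
  also have "\<dots> \<le> card Mset + card Mset" using card_image_le[OF fM] by simp
  also have "\<dots> \<le> 2*(CARD('a)-1)" using card_Mset by simp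
  finally show ?thesis .
qed

lemma count: "card (sz_carrier m :: ('a^4^4) set) * (CARD('a) - 2) \<le> card Xs * (2*(CARD('a)-1))"
proof -
  interpret H: group H by (rule grp)
  have "(sz_carrier m :: ('a^4^4) set) \<times> Cs \<subseteq> (\<Union>x\<in>Xs. Fib x)"
  proof
    fix p :: "('a^4^4) \<times> ('a^4^4)" assume p: "p \<in> sz_carrier m \<times> Cs"
    then have "fst p \<otimes>\<^bsub>H\<^esub> snd p \<otimes>\<^bsub>H\<^esub> inv\<^bsub>H\<^esub> (fst p) \<in> Xs" unfolding Xs_def by force
    moreover have "p \<in> Fib (fst p \<otimes>\<^bsub>H\<^esub> snd p \<otimes>\<^bsub>H\<^esub> inv\<^bsub>H\<^esub> (fst p))" using p by (simp add: Fib_def)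
    ultimately show "p \<in> (\<Union>x\<in>Xs. Fib x)" by blast
  qed
  moreover have "finite (\<Union>x\<in>Xs. Fib x)" by (rule finite_subset[of _ UNIV]) auto
  ultimately have "card ((sz_carrier m :: ('a^4^4) set) \<times> Cs) \<le> card (\<Union>x\<in>Xs. Fib x)" by (rule card_mono[rotated])
  also have "\<dots> \<le> (\<Sum>x\<in>Xs. card (Fib x))" by (rule card_UN_le) (rule finite_subset[OF Xs_sub finS])
  also have "\<dots> \<le> (\<Sum>x\<in>Xs. 2*(CARD('a)-1))" using fiber by (rule sum_mono)
  also have "\<dots> = card Xs * (2*(CARD('a)-1))" by simp
  finally show ?thesis by (simp add: card_cartesian_product card_Cs)
qed

lemma psi_bound: "psi H \<ge> card Xs * 7 + (card (sz_carrier m :: ('a^4^4) set) - card Xs)"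
proof -
  interpret H: group H by (rule grp)
  have fX: "finite Xs" by (rule finite_subset[OF Xs_sub finS])
  have "psi H = (\<Sum>x\<in>sz_carrier m. H.ord x)" by (simp add: psi_def carrH)
  also have "\<dots> = (\<Sum>x\<in>sz_carrier m - Xs. H.ord x) + (\<Sum>x\<in>Xs. H.ord x)"
    by (rule sum.subset_diff[OF Xs_sub finS])
  finally have e: "psi H = (\<Sum>x\<in>sz_carrier m - Xs. H.ord x) + (\<Sum>x\<in>Xs. H.ord x)" .
  have "(\<Sum>x\<in>Xs. 7) \<le> (\<Sum>x\<in>Xs. H.ord x)" by (rule sum_mono) (rule ord_Xs)
  then have a: "card Xs * 7 \<le> (\<Sum>x\<in>Xs. H.ord x)" by simp
  have "(\<Sum>x\<in>sz_carrier m - Xs. 1) \<le> (\<Sum>x\<in>sz_carrier m - Xs. H.ord x)"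
  proof (rule sum_mono)
    fix x assume "x \<in> sz_carrier m - Xs"
    then show "1 \<le> H.ord x" using H.ord_ge_1 finS by (auto simp: carrH)
  qed
  then have b: "card (sz_carrier m - Xs) * 1 \<le> (\<Sum>x\<in>sz_carrier m - Xs. H.ord x)" by simp
  have c: "card (sz_carrier m - Xs) = card (sz_carrier m :: ('a^4^4) set) - card Xs" using Xs_sub fX by (simp add: card_Diff_subset)
  show ?thesis using e a b c by simp
qed

lemma avg_H: "avg_order H \<ge> 3.55"
proof -
  define n where "n = card (sz_carrier m :: ('a^4^4) set)"
  define X where "X = card Xs"
  define Q where "Q = CARD('a)"
  have Q8: "Q \<ge> 8" using q_ge8 card by (simp add: Q_def)
  have XS: "X \<le> n" unfolding X_def n_def by (rule card_mono[OF finS Xs_sub])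
  have n0: "n > 0" unfolding n_def using finS sz_carrier.one by (auto simp: card_gt_0_iff)
  have cnt: "n * (Q - 2) \<le> X * (2*(Q-1))" using count by (simp add: n_def X_def Q_def)
  have "6*(Q-1) \<le> 7*(Q-2)" using Q8 by simp
  then have "n*(6*(Q-1)) \<le> n*(7*(Q-2))" by (rule mult_le_mono2)
  also have "\<dots> = 7*(n*(Q-2))" by simp
  also have "\<dots> \<le> 7*(X*(2*(Q-1)))" using cnt by simp
  finally have "(6*n)*(Q-1) \<le> (14*X)*(Q-1)" by (simp add: algebra_simps)
  then have "6*n \<le> 14*X" using Q8 by simp
  then have k: "3*n \<le> 7*X" by simp
  have ps: "psi H \<ge> X * 7 + (n - X)" using psi_bound by (simp add: X_def n_def)
  have "25 * n \<le> 7 * psi H" using ps k XS by simp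
  then have "real (25 * n) \<le> real (7 * psi H)" by (rule of_nat_mono)
  then have r: "25 * real n \<le> 7 * real (psi H)" by simp
  have "avg_order H = real (psi H) / real n" by (simp add: avg_order_def n_def carrH)
  moreover have "real (psi H) / real n \<ge> 3.55" using r n0 by (simp add: field_simps)
  ultimately show ?thesis by simp
qed

end

theorem lemma4p11:
  fixes G :: "('g, 'c) monoid_scheme"
    and m :: nat
    and F :: "'a::{field, finite} itself"
  assumes "m \<ge> 1"
    and "CARD('a) = 2 ^ (2 * m + 1)"
    and "group G"
    and "G \<cong> (Sz m :: ('a^4^4) monoid)"
  shows "avg_order G \<ge> 3.55"
proof -
  have mon: "monoid (Sz m :: ('a^4^4) monoid)" by (rule Sz_monoid)
  have grpH: "group (Sz m :: ('a^4^4) monoid)" using group.iso_imp_group[OF assms(3) assms(4) mon] .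
  interpret S: szg m F by (intro szg.intro szf.intro szg_axioms.intro) (use assms grpH in auto)
  obtain \<phi> where phi: "\<phi> \<in> iso G (Sz m :: ('a^4^4) monoid)" using assms(4) unfolding is_iso_def by blast
  have bij: "bij_betw \<phi> (carrier G) (carrier (Sz m :: ('a^4^4) monoid))" using phi by (simp add: iso_def)
  have "psi G = (\<Sum>x\<in>carrier G. group.ord (Sz m :: ('a^4^4) monoid) (\<phi> x))"
    unfolding psi_def using ord_iso[OF assms(3) grpH phi] by simp
  also have "\<dots> = (\<Sum>y\<in>carrier (Sz m :: ('a^4^4) monoid). group.ord (Sz m :: ('a^4^4) monoid) y)"
  proof -
    have inj: "inj_on \<phi> (carrier G)" and im: "\<phi> ` carrier G = carrier (Sz m :: ('a^4^4) monoid)"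
      using bij by (auto simp: bij_betw_def)
    have "(\<Sum>y\<in>carrier (Sz m :: ('a^4^4) monoid). group.ord (Sz m :: ('a^4^4) monoid) y)
       = (\<Sum>y\<in>\<phi> ` carrier G. group.ord (Sz m :: ('a^4^4) monoid) y)" by (simp only: im)
    also have "\<dots> = (\<Sum>x\<in>carrier G. group.ord (Sz m :: ('a^4^4) monoid) (\<phi> x))"
      by (simp add: sum.reindex[OF inj])
    finally show ?thesis by simp
  qed
  also have "\<dots> = psi (Sz m :: ('a^4^4) monoid)" by (simp add: psi_def)
  finally have ps: "psi G = psi (Sz m :: ('a^4^4) monoid)" .
  have cd: "card (carrier G) = card (carrier (Sz m :: ('a^4^4) monoid))" using assms(4) by (rule iso_same_card)
  have "avg_order G = avg_order (Sz m :: ('a^4^4) monoid)" by (simp add: avg_order_def ps cd)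
  then show ?thesis using S.avg_H by simp
qed


end
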